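(* Let $G=(V,E)$ be a graph on $V=\{1,\ldots,n\}$ and $b(\mathbf x)=\sum_{ij\in E}a_{ij}x_ix_j$ with $a_{ij}>0$ for all $ij\in E$. Then $Q=\operatorname{conv}(B)$ if and only if $G$ is bipartite.
   Context: $B=\{(\mathbf x,z)\in[0,1]^n\times\mathbb R:z=b(\mathbf x)\}$ and $\operatorname{conv}(B)$ is its convex hull. The McCormick polytopes are $P=\{(\mathbf x,\mathbf y)\in[0,1]^n\times[0,1]^{|E|}: y_{ij}\le x_i,\ y_{ij}\le x_j,\ y_{ij}\ge x_i+x_j-1\ \forall ij\in E\}$ and $Q=\{(\mathbf x,z)\in[0,1]^n\times\mathbb R:\exists\mathbf y\in[0,1]^{|E|}\text{ with }(\mathbf x,\mathbf y)\in P,\ z=\sum_{ij\in E}a_{ij}y_{ij}\}$. *)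

theory Defs
  imports "HOL-Analysis.Analysis"
begin

text \<open>Vertices: the finite type 'n (playing the role of {1,...,n}); edges: a set of
  2-element vertex sets (simple graph). Weights a are indexed by edges.\<close>

definition simple_graph :: "'n::finite set set \<Rightarrow> bool" where
  "simple_graph E \<longleftrightarrow> (\<forall>e\<in>E. card e = 2)"

definition bipartite :: "'n::finite set set \<Rightarrow> bool" where
  "bipartite E \<longleftrightarrow> (\<exists>S. \<forall>e\<in>E. card (e \<inter> S) = 1)"

definition cube01 :: "(real^'n::finite) set" where
  "cube01 = {x. \<forall>i. 0 \<le> x$i \<and> x$i \<le> 1}"

definition bilin :: "'n::finite set set \<Rightarrow> ('n set \<Rightarrow> real) \<Rightarrow> real^'n \<Rightarrow> real" where
  "bilin E a x = (\<Sum>e\<in>E. a e * (\<Prod>i\<in>e. x$i))"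

definition graph_B :: "'n::finite set set \<Rightarrow> ('n set \<Rightarrow> real) \<Rightarrow> ((real^'n) \<times> real) set" where
  "graph_B E a = {p. fst p \<in> cube01 \<and> snd p = bilin E a (fst p)}"

definition mccormick_P :: "'n::finite set set \<Rightarrow> ((real^'n) \<times> ('n set \<Rightarrow> real)) set" where
  "mccormick_P E = {(x, y). (x::real^'n) \<in> cube01 \<and> (\<forall>e. e \<notin> E \<longrightarrow> y e = 0) \<and>
     (\<forall>e\<in>E. 0 \<le> y e \<and> y e \<le> 1 \<and> (\<forall>i\<in>e. y e \<le> x$i) \<and> y e \<ge> (\<Sum>i\<in>e. x$i) - 1)}"

definition mccormick_Q :: "'n::finite set set \<Rightarrow> ('n set \<Rightarrow> real) \<Rightarrow> ((real^'n) \<times> real) set" where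
  "mccormick_Q E a = {(x, z). (x::real^'n) \<in> cube01 \<and>
     (\<exists>y. (x, y) \<in> mccormick_P E \<and> z = (\<Sum>e\<in>E. a e * y e))}"

end

theory Submission
  imports Defs
begin


lemma merge_min:
  fixes a b t tm tp mu :: real
  assumes "tm < t" "t < tp" "t = mu*tm + (1-mu)*tp"
    and "a = t \<or> a \<le> tm \<or> a \<ge> tp" "b = t \<or> b \<le> tm \<or> b \<ge> tp"
  shows "min a b = mu * min (if a = t then tm else a) (if b = t then tm else b)
           + (1-mu) * min (if a = t then tp else a) (if b = t then tp else b)"
  using assms by (cases "a = t"; cases "b = t") (auto simp: min_def algebra_simps)

definition V01 :: "(real^'n::finite) set" where
  "V01 = range (\<lambda>f::'n\<Rightarrow>bool. \<chi> i. if f i then 1 else 0)"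

lemma V01_finite: "finite (V01 :: (real^'n::finite) set)"
  unfolding V01_def by simp

lemma V01_01: "v \<in> V01 \<Longrightarrow> v$i = 0 \<or> v$i = 1"
  unfolding V01_def by auto

lemma in_V01:
  fixes y :: "real^'n::finite"
  assumes h: "\<forall>i. y$i = 0 \<or> y$i = 1" shows "y \<in> V01"
proof -
  have "y = (\<chi> i. if y$i = 1 then 1 else 0)"
    using h by (auto simp: vec_eq_iff)
  then show ?thesis unfolding V01_def by (rule image_eqI[where x="\<lambda>i. y$i = 1"]) simp
qed


definition Vals :: "real^'n::finite \<Rightarrow> real set" where
  "Vals y = insert 0 (insert 1 (range (\<lambda>i. y$i)))"

lemma Vals_finite: "finite (Vals y)"
  unfolding Vals_def by simp

lemma lin_comb:
  fixes g h f :: "'a \<Rightarrow> real"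
  shows "(\<Sum>v\<in>A. (c*g v + d*h v) * f v) = c*(\<Sum>v\<in>A. g v * f v) + d*(\<Sum>v\<in>A. h v * f v)"
  by (simp add: algebra_simps sum.distrib sum_distrib_left)

lemma delta_sum:
  fixes y :: "real^'n::finite"
  and f :: "real^'n \<Rightarrow> real"
  assumes "y \<in> V01"
  shows "(\<Sum>v\<in>V01. (if v = y then 1 else 0) * f v) = f y"
proof -
  have "(\<Sum>v\<in>V01. (if v = y then 1 else 0) * f v) = (\<Sum>v\<in>V01. (if v = y then f v else 0))"
    by (rule sum.cong) auto
  also have "\<dots> = f y" using assms sum.delta[OF V01_finite, of y f] by simp
  finally show ?thesis .
qed

lemma decomp_aux:
  "\<forall>y::real^'n::finite. card (Vals y) = n \<longrightarrow> y \<in> cube01 \<longrightarrow>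
     (\<exists>u. (\<forall>v\<in>V01. u v \<ge> 0) \<and> sum u V01 = 1 \<and> (\<forall>i. (\<Sum>v\<in>V01. u v * v$i) = y$i) \<and>
          (\<forall>i j. (\<Sum>v\<in>V01. u v * (v$i * v$j)) = min (y$i) (y$j)))"
proof (induction n rule: less_induct)
  case (less n)
  show ?case
  proof (intro allI impI)
    fix y :: "real^'n"
    assume cy: "card (Vals y) = n" and yc: "y \<in> cube01"
    show "\<exists>u. (\<forall>v\<in>V01. u v \<ge> 0) \<and> sum u V01 = 1 \<and> (\<forall>i. (\<Sum>v\<in>V01. u v * v$i) = y$i) \<and>
          (\<forall>i j. (\<Sum>v\<in>V01. u v * (v$i * v$j)) = min (y$i) (y$j))"
    proof (cases "\<forall>i. y$i = 0 \<or> y$i = 1")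
      case True
      then have yV: "y \<in> V01" by (rule in_V01)
      define u where "u v = (if v = y then 1 else (0::real))" for v :: "real^'n"
      have s: "(\<Sum>v\<in>V01. u v * f v) = f y" for f
        unfolding u_def by (rule delta_sum[OF yV])
      have "sum u V01 = 1" using s[of "\<lambda>_. 1"] by simp
      moreover have "\<forall>i j. (\<Sum>v\<in>V01. u v * (v$i * v$j)) = min (y$i) (y$j)"
      proof (intro allI)
        fix i j
        have "y$i * y$j = min (y$i) (y$j)" using True[rule_format, of i] True[rule_format, of j] by auto
        then show "(\<Sum>v\<in>V01. u v * (v$i * v$j)) = min (y$i) (y$j)" using s[of "\<lambda>v. v$i * v$j"] by simp
      qed
      ultimately show ?thesis using s by (auto simp: u_def intro!: exI[of _ u])
    next
      case False
      then obtain i0 where i0: "y$i0 \<noteq> 0" "y$i0 \<noteq> 1" by blast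
      define t where "t = y$i0"
      have "0 \<le> t" "t \<le> 1" "t \<noteq> 0" "t \<noteq> 1" using yc i0 unfolding t_def cube01_def by auto
      then have t01: "0 < t" "t < 1" by linarith+
      define L where "L = {v\<in>Vals y. v < t}"
      define U where "U = {v\<in>Vals y. v > t}"
      have Lf: "finite L" "L \<noteq> {}" using Vals_finite t01 unfolding L_def Vals_def by auto
      have Uf: "finite U" "U \<noteq> {}" using Vals_finite t01 unfolding U_def Vals_def by auto
      define tm where "tm = Max L"
      define tp where "tp = Min U"
      have tmL: "tm \<in> L" using Lf unfolding tm_def by simp
      have tpU: "tp \<in> U" using Uf unfolding tp_def by simp
      have tmt: "tm < t" using tmL unfolding L_def by simp
      have tpt: "t < tp" using tpU unfolding U_def by simp
      have tm0: "0 \<le> tm" using Lf t01 unfolding tm_def L_def Vals_def by (simp add: Max_ge_iff)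
      have tp1: "tp \<le> 1" using Uf t01 unfolding tp_def U_def Vals_def by (simp add: Min_le_iff)
      have key: "y$k = t \<or> y$k \<le> tm \<or> y$k \<ge> tp" for k
      proof -
        have "y$k \<in> Vals y" unfolding Vals_def by simp
        then have "y$k < t \<Longrightarrow> y$k \<in> L" "y$k > t \<Longrightarrow> y$k \<in> U" unfolding L_def U_def by auto
        then show ?thesis using Lf Uf unfolding tm_def tp_def
          using Max_ge Min_le linorder_neqE_linordered_idom by metis
      qed
      define ym where "ym = (\<chi> k. if y$k = t then tm else y$k)"
      define yp where "yp = (\<chi> k. if y$k = t then tp else y$k)"
      define mu where "mu = (tp - t) / (tp - tm)"
      have "mu*(tp - tm) = tp - t" using tmt tpt unfolding mu_def by simp
      then have mu_eq: "t = mu*tm + (1-mu)*tp" by (simp add: algebra_simps)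
      have mu01: "0 \<le> mu" "0 \<le> 1 - mu" using tmt tpt unfolding mu_def
        by (simp_all add: field_simps)
      have ymc: "ym \<in> cube01" using yc tm0 tmt t01 unfolding ym_def cube01_def by auto
      have ypc: "yp \<in> cube01" using yc tp1 tpt t01 unfolding yp_def cube01_def by auto
      have tV: "t \<in> Vals y" unfolding t_def Vals_def by simp
      have tmV: "tm \<in> Vals y" "tm \<noteq> t" using tmL tmt unfolding L_def by auto
      have tpV: "tp \<in> Vals y" "tp \<noteq> t" using tpU tpt unfolding U_def by auto
      have "Vals ym \<subseteq> Vals y - {t}"
        using t01 tmV unfolding Vals_def ym_def by auto
      then have "Vals ym \<subset> Vals y" using tV by blast
      then have cm: "card (Vals ym) < n" using cy Vals_finite psubset_card_mono by blast
      have "Vals yp \<subseteq> Vals y - {t}"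
        using t01 tpV unfolding Vals_def yp_def by auto
      then have "Vals yp \<subset> Vals y" using tV by blast
      then have cp: "card (Vals yp) < n" using cy Vals_finite psubset_card_mono by blast
      obtain um where um: "\<forall>v\<in>V01. um v \<ge> 0" "sum um V01 = 1"
          "\<forall>i. (\<Sum>v\<in>V01. um v * v$i) = ym$i"
          "\<forall>i j. (\<Sum>v\<in>V01. um v * (v$i * v$j)) = min (ym$i) (ym$j)"
        using less.IH[OF cm] ymc by blast
      obtain up where up: "\<forall>v\<in>V01. up v \<ge> 0" "sum up V01 = 1"
          "\<forall>i. (\<Sum>v\<in>V01. up v * v$i) = yp$i"
          "\<forall>i j. (\<Sum>v\<in>V01. up v * (v$i * v$j)) = min (yp$i) (yp$j)"
        using less.IH[OF cp] ypc by blast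
      define u where "u v = mu * um v + (1-mu) * up v" for v
      have lc: "(\<Sum>v\<in>V01. u v * f v) = mu*(\<Sum>v\<in>V01. um v * f v) + (1-mu)*(\<Sum>v\<in>V01. up v * f v)" for f
        unfolding u_def by (rule lin_comb)
      have "\<forall>v\<in>V01. u v \<ge> 0" using um(1) up(1) mu01 unfolding u_def by simp
      moreover have "sum u V01 = 1" using lc[of "\<lambda>_. 1"] um(2) up(2) by simp
      moreover have "\<forall>i. (\<Sum>v\<in>V01. u v * v$i) = y$i"
      proof
        fix i
        have "mu * ym$i + (1-mu) * yp$i = y$i"
        proof (cases "y$i = t")
          case True then show ?thesis using mu_eq unfolding ym_def yp_def by simp
        next
          case False then show ?thesis unfolding ym_def yp_def by (simp add: algebra_simps)
        qed
        then show "(\<Sum>v\<in>V01. u v * v$i) = y$i"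
          using lc[of "\<lambda>v. v$i"] um(3) up(3) by simp
      qed
      moreover have "\<forall>i j. (\<Sum>v\<in>V01. u v * (v$i * v$j)) = min (y$i) (y$j)"
      proof (intro allI)
        fix i j
        have "min (y$i) (y$j) = mu * min (ym$i) (ym$j) + (1-mu) * min (yp$i) (yp$j)"
          unfolding ym_def yp_def using merge_min[OF tmt tpt mu_eq key[of i] key[of j]] by simp
        then show "(\<Sum>v\<in>V01. u v * (v$i * v$j)) = min (y$i) (y$j)"
          using lc[of "\<lambda>v. v$i * v$j"] um(4) up(4) by simp
      qed
      ultimately show ?thesis by blast
    qed
  qed
qed

lemma decomp:
  fixes y :: "real^'n::finite"
  assumes "y \<in> cube01"
  shows "\<exists>u. (\<forall>v\<in>V01. u v \<ge> 0) \<and> sum u V01 = 1 \<and> (\<forall>i. (\<Sum>v\<in>V01. u v * v$i) = y$i) \<and>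
          (\<forall>i j. (\<Sum>v\<in>V01. u v * (v$i * v$j)) = min (y$i) (y$j))"
  using decomp_aux assms by blast



lemma edge2: "card e = 2 \<Longrightarrow> \<exists>i j. e = {i,j} \<and> i \<noteq> j" by (simp add: card_2_iff)

lemma cb_le: "x \<le> a \<Longrightarrow> y \<le> a \<Longrightarrow> 0 \<le> u \<Longrightarrow> 0 \<le> v \<Longrightarrow> u + v = 1 \<Longrightarrow> u * x + v * y \<le> (a::real)"
proof -
  assume h: "x \<le> a" "y \<le> a" "0 \<le> u" "0 \<le> v" "u + v = 1"
  have "u * x \<le> u * a" "v * y \<le> v * a" using h by (simp_all add: mult_left_mono)
  then have "u * x + v * y \<le> (u + v) * a" by (simp add: algebra_simps)
  then show ?thesis using h by simp
qed

lemma cb_ge: "a \<le> x \<Longrightarrow> a \<le> y \<Longrightarrow> 0 \<le> u \<Longrightarrow> 0 \<le> v \<Longrightarrow> u + v = 1 \<Longrightarrow> (a::real) \<le> u * x + v * y"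
proof -
  assume h: "a \<le> x" "a \<le> y" "0 \<le> u" "0 \<le> v" "u + v = 1"
  have "u * a \<le> u * x" "v * a \<le> v * y" using h by (simp_all add: mult_left_mono)
  then have "(u + v) * a \<le> u * x + v * y" by (simp add: algebra_simps)
  then show ?thesis using h by simp
qed

lemma cb_mono: "x \<le> x' \<Longrightarrow> y \<le> y' \<Longrightarrow> 0 \<le> u \<Longrightarrow> 0 \<le> v \<Longrightarrow> u * x + v * y \<le> u * x' + v * (y'::real)"
  by (simp add: add_mono mult_left_mono)

lemma Q_convex:
  fixes E :: "'n::finite set set"
  shows "convex (mccormick_Q E a)"
proof (rule convexI)
  fix p1 p2 :: "(real^'n) \<times> real" and u v :: real
  assume p1: "p1 \<in> mccormick_Q E a" and p2: "p2 \<in> mccormick_Q E a"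
    and uv: "0 \<le> u" "0 \<le> v" "u + v = 1"
  obtain x1 z1 where e1: "p1 = (x1, z1)" by (cases p1)
  obtain x2 z2 where e2: "p2 = (x2, z2)" by (cases p2)
  obtain y1 where y1: "x1 \<in> cube01" "(x1, y1) \<in> mccormick_P E" "z1 = (\<Sum>e\<in>E. a e * y1 e)"
    using p1 unfolding e1 mccormick_Q_def by auto
  obtain y2 where y2: "x2 \<in> cube01" "(x2, y2) \<in> mccormick_P E" "z2 = (\<Sum>e\<in>E. a e * y2 e)"
    using p2 unfolding e2 mccormick_Q_def by auto
  define x where "x = u *\<^sub>R x1 + v *\<^sub>R x2"
  define y where "y e = u * y1 e + v * y2 e" for e
  have xc: "x$i = u * x1$i + v * x2$i" for i unfolding x_def by simp
  have cube: "x \<in> cube01"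
    using y1(1) y2(1) uv unfolding cube01_def
    by (auto simp: xc intro!: cb_le cb_ge)
  have P1: "\<forall>e. e \<notin> E \<longrightarrow> y1 e = 0" "\<forall>e\<in>E. 0 \<le> y1 e \<and> y1 e \<le> 1 \<and> (\<forall>i\<in>e. y1 e \<le> x1$i) \<and> y1 e \<ge> (\<Sum>i\<in>e. x1$i) - 1"
    using y1(2) unfolding mccormick_P_def by auto
  have P2: "\<forall>e. e \<notin> E \<longrightarrow> y2 e = 0" "\<forall>e\<in>E. 0 \<le> y2 e \<and> y2 e \<le> 1 \<and> (\<forall>i\<in>e. y2 e \<le> x2$i) \<and> y2 e \<ge> (\<Sum>i\<in>e. x2$i) - 1"
    using y2(2) unfolding mccormick_P_def by auto
  have sx: "(\<Sum>i\<in>e. x$i) - 1 = u * ((\<Sum>i\<in>e. x1$i) - 1) + v * ((\<Sum>i\<in>e. x2$i) - 1)" for e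
    using uv unfolding xc by (simp add: sum.distrib sum_distrib_left algebra_simps)
  have "(x, y) \<in> mccormick_P E"
    unfolding mccormick_P_def
  proof (simp, intro conjI)
    show "x \<in> cube01" by (rule cube)
    show "\<forall>e. e \<notin> E \<longrightarrow> y e = 0" using P1(1) P2(1) unfolding y_def by simp
    show "\<forall>e\<in>E. 0 \<le> y e \<and> y e \<le> 1 \<and> (\<forall>i\<in>e. y e \<le> x$i) \<and> (\<Sum>i\<in>e. x$i) - 1 \<le> y e"
    proof
      fix e assume eE: "e \<in> E"
      show "0 \<le> y e \<and> y e \<le> 1 \<and> (\<forall>i\<in>e. y e \<le> x$i) \<and> (\<Sum>i\<in>e. x$i) - 1 \<le> y e"
      proof (intro conjI)
        have h1: "0 \<le> y1 e \<and> y1 e \<le> 1 \<and> (\<forall>i\<in>e. y1 e \<le> x1$i) \<and> y1 e \<ge> (\<Sum>i\<in>e. x1$i) - 1"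
          using P1(2) eE by blast
        have h2: "0 \<le> y2 e \<and> y2 e \<le> 1 \<and> (\<forall>i\<in>e. y2 e \<le> x2$i) \<and> y2 e \<ge> (\<Sum>i\<in>e. x2$i) - 1"
          using P2(2) eE by blast
        show "0 \<le> y e" unfolding y_def using h1 h2 uv by (auto intro: cb_ge)
        show "y e \<le> 1" unfolding y_def using h1 h2 uv by (auto intro: cb_le)
        show "\<forall>i\<in>e. y e \<le> x$i" unfolding y_def xc using h1 h2 uv by (auto intro: cb_mono)
        show "(\<Sum>i\<in>e. x$i) - 1 \<le> y e" unfolding y_def sx using h1 h2 uv by (auto intro: cb_mono)
      qed
    qed
  qed
  moreover have "u * z1 + v * z2 = (\<Sum>e\<in>E. a e * y e)"
    unfolding y1(3) y2(3) y_def by (simp add: sum.distrib sum_distrib_left algebra_simps)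
  ultimately show "u *\<^sub>R p1 + v *\<^sub>R p2 \<in> mccormick_Q E a"
    unfolding e1 e2 mccormick_Q_def using cube by (auto simp: x_def)
qed



lemma mem_P: "((x::real^'n::finite), y) \<in> mccormick_P E \<longleftrightarrow> x \<in> cube01 \<and> (\<forall>e. e \<notin> E \<longrightarrow> y e = 0) \<and>
     (\<forall>e\<in>E. 0 \<le> y e \<and> y e \<le> 1 \<and> (\<forall>i\<in>e. y e \<le> x$i) \<and> y e \<ge> (\<Sum>i\<in>e. x$i) - 1)"
  unfolding mccormick_P_def by simp

lemma B_sub_Q:
  fixes E :: "'n::finite set set"
  assumes sg: "simple_graph E"
  shows "graph_B E a \<subseteq> mccormick_Q E a"
proof
  fix p assume pB: "p \<in> graph_B E a"
  define x where "x = fst p"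
  have p: "p = (x, bilin E a x)" and xc: "x \<in> cube01"
    using pB unfolding graph_B_def x_def by (simp_all add: prod_eq_iff)
  define y where "y e = (if e \<in> E then (\<Prod>i\<in>e. x$i) else 0)" for e
  have "(x, y) \<in> mccormick_P E"
    unfolding mem_P
  proof (intro conjI)
    show "x \<in> cube01" by (rule xc)
    show "\<forall>e. e \<notin> E \<longrightarrow> y e = 0" unfolding y_def by simp
    show "\<forall>e\<in>E. 0 \<le> y e \<and> y e \<le> 1 \<and> (\<forall>i\<in>e. y e \<le> x$i) \<and> (\<Sum>i\<in>e. x$i) - 1 \<le> y e"
    proof
      fix e assume eE: "e \<in> E"
      have ce: "card e = 2" using sg eE unfolding simple_graph_def by blast
      obtain i j where e: "e = {i,j}" "i \<noteq> j" using edge2[OF ce] by blast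
      have c: "0 \<le> x$i" "x$i \<le> 1" "0 \<le> x$j" "x$j \<le> 1" using xc unfolding cube01_def by auto
      have ye: "y e = x$i * x$j" unfolding y_def using eE e by simp
      have se: "(\<Sum>k\<in>e. x$k) = x$i + x$j" using e by simp
      have l: "0 \<le> (1 - x$i) * (1 - x$j)" using c by simp
      then have l2: "x$i + x$j - 1 \<le> x$i * x$j" by (simp add: algebra_simps)
      have m1: "x$i * x$j \<le> x$i" using c by (simp add: mult_left_le)
      have m2: "x$i * x$j \<le> x$j" using c by (simp add: mult_left_le_one_le)
      have m0: "0 \<le> x$i * x$j" using c by simp
      have m3: "x$i * x$j \<le> 1" using c by (simp add: mult_le_one)
      show "0 \<le> y e \<and> y e \<le> 1 \<and> (\<forall>i\<in>e. y e \<le> x$i) \<and> (\<Sum>i\<in>e. x$i) - 1 \<le> y e"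
        unfolding ye se using e(1) m0 m1 m2 m3 l2 by blast
    qed
  qed
  moreover have "bilin E a x = (\<Sum>e\<in>E. a e * y e)"
    unfolding bilin_def y_def by (rule sum.cong) simp_all
  ultimately show "p \<in> mccormick_Q E a" unfolding p mccormick_Q_def using xc by auto
qed
lemma V01_cube: "v \<in> V01 \<Longrightarrow> v \<in> cube01"
proof -
  assume v: "v \<in> V01"
  have "0 \<le> v$i \<and> v$i \<le> 1" for i using V01_01[OF v, of i] by auto
  then show ?thesis unfolding cube01_def by simp
qed

lemma conv_point:
  fixes E :: "'n::finite set set" and g :: "'b \<Rightarrow> real^'n"
  assumes "finite V" "\<forall>v\<in>V. u v \<ge> 0" "sum u V = 1" "\<forall>v\<in>V. g v \<in> cube01"
  shows "((\<Sum>v\<in>V. u v *\<^sub>R g v), (\<Sum>v\<in>V. u v * bilin E a (g v))) \<in> convex hull graph_B E a"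
proof -
  have "(\<Sum>v\<in>V. u v *\<^sub>R (g v, bilin E a (g v))) \<in> convex hull graph_B E a"
    using assms by (intro convex_sum) (auto intro!: hull_inc simp: graph_B_def)
  moreover have "(\<Sum>v\<in>V. u v *\<^sub>R (g v, bilin E a (g v))) =
     ((\<Sum>v\<in>V. u v *\<^sub>R g v), (\<Sum>v\<in>V. u v * bilin E a (g v)))"
    by (simp add: prod_eq_iff fst_sum snd_sum)
  ultimately show ?thesis by simp
qed

lemma bilin_swap:
  "(\<Sum>v\<in>V. u v * bilin E a (g v)) = (\<Sum>e\<in>E. a e * (\<Sum>v\<in>V. u v * (\<Prod>i\<in>e. g v $ i)))"
  unfolding bilin_def
  by (simp add: sum_distrib_left sum.swap[of _ V] algebra_simps)

definition hiF :: "'n::finite set set \<Rightarrow> ('n set \<Rightarrow> real) \<Rightarrow> real^'n \<Rightarrow> real" where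
  "hiF E a x = (\<Sum>e\<in>E. a e * Min ((\<lambda>i. x$i) ` e))"

definition loF :: "'n::finite set set \<Rightarrow> ('n set \<Rightarrow> real) \<Rightarrow> real^'n \<Rightarrow> real" where
  "loF E a x = (\<Sum>e\<in>E. a e * max 0 ((\<Sum>i\<in>e. x$i) - 1))"

lemma hi_in:
  fixes E :: "'n::finite set set"
  assumes sg: "simple_graph E" and xc: "x \<in> cube01"
  shows "(x, hiF E a x) \<in> convex hull graph_B E a"
proof -
  obtain u where u: "\<forall>v\<in>V01. u v \<ge> 0" "sum u V01 = 1" "\<forall>i. (\<Sum>v\<in>V01. u v * v$i) = x$i"
    "\<forall>i j. (\<Sum>v\<in>V01. u v * (v$i * v$j)) = min (x$i) (x$j)"
    using decomp[OF xc] by blast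
  have vc: "\<forall>v\<in>(V01::(real^'n) set). id v \<in> cube01" using V01_cube[where 'a='n] by (simp add: id_def)
  have "(\<Sum>v\<in>V01. u v *\<^sub>R id v) = x" using u(3) by (simp add: vec_eq_iff)
  moreover have "(\<Sum>v\<in>V01. u v * bilin E a (id v)) = hiF E a x"
    unfolding bilin_swap hiF_def
  proof (rule sum.cong)
    fix e assume eE: "e \<in> E"
    have ce: "card e = 2" using sg eE unfolding simple_graph_def by blast
    obtain i j where e: "e = {i,j}" "i \<noteq> j" using edge2[OF ce] by blast
    show "a e * (\<Sum>v\<in>V01. u v * (\<Prod>i\<in>e. id v $ i)) = a e * Min ((\<lambda>i. x$i) ` e)"
      using e u(4) by simp
  qed simp
  ultimately show ?thesis using conv_point[OF V01_finite u(1) u(2) vc, of E a] by simp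
qed



lemma edge_orient:
  assumes e: "e = {i,j}" "i \<noteq> j" and c: "card (e \<inter> S) = 1"
  shows "\<exists>p q. e = {p,q} \<and> p \<noteq> q \<and> p \<in> S \<and> q \<notin> S"
proof (cases "i \<in> S")
  case True
  show ?thesis
  proof (cases "j \<in> S")
    case True
    then have "e \<inter> S = {i,j}" using e \<open>i \<in> S\<close> by auto
    then show ?thesis using c e by simp
  next
    case False then show ?thesis using e True by blast
  qed
next
  case False
  show ?thesis
  proof (cases "j \<in> S")
    case True then show ?thesis using e False by (metis insert_commute)
  next
    case False
    then have "e \<inter> S = {}" using e \<open>i \<notin> S\<close> by auto
    then show ?thesis using c by simp
  qed
qed

definition flipS :: "'n set \<Rightarrow> real^'n::finite \<Rightarrow> real^'n" where
  "flipS S v = (\<chi> k. if k \<in> S then 1 - v$k else v$k)"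

lemma flipS_nth: "flipS S v $ k = (if k \<in> S then 1 - v$k else v$k)"
  unfolding flipS_def by simp

lemma flipS_cube: "v \<in> cube01 \<Longrightarrow> flipS S v \<in> cube01"
  unfolding cube01_def by (simp add: flipS_nth)

lemma lo_in:
  fixes E :: "'n::finite set set"
  assumes sg: "simple_graph E" and bp: "\<forall>e\<in>E. card (e \<inter> S) = 1" and xc: "x \<in> cube01"
  shows "(x, loF E a x) \<in> convex hull graph_B E a"
proof -
  define y where "y = flipS S x"
  have yc: "y \<in> cube01" unfolding y_def by (rule flipS_cube[OF xc])
  obtain u where u: "\<forall>v\<in>V01. u v \<ge> 0" "sum u V01 = 1" "\<forall>i. (\<Sum>v\<in>V01. u v * v$i) = y$i"
    "\<forall>i j. (\<Sum>v\<in>V01. u v * (v$i * v$j)) = min (y$i) (y$j)"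
    using decomp[OF yc] by blast
  have vc: "\<forall>v\<in>(V01::(real^'n) set). flipS S v \<in> cube01" using V01_cube[where 'a='n] flipS_cube by blast
  have s1: "(\<Sum>v\<in>V01. u v * (1 - v$k)) = 1 - y$k" for k
    using u(2) u(3) by (simp add: right_diff_distrib sum_subtractf)
  have "(\<Sum>v\<in>V01. u v *\<^sub>R flipS S v) = x"
  proof (subst vec_eq_iff, intro allI)
    fix k
    show "(\<Sum>v\<in>V01. u v *\<^sub>R flipS S v) $ k = x $ k"
    proof (cases "k \<in> S")
      case True
      then show ?thesis using s1[of k] by (simp add: flipS_nth y_def)
    next
      case False
      then show ?thesis using u(3) by (simp add: flipS_nth y_def)
    qed
  qed
  moreover have "(\<Sum>v\<in>V01. u v * bilin E a (flipS S v)) = loF E a x"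
    unfolding bilin_swap loF_def
  proof (rule sum.cong)
    fix e assume eE: "e \<in> E"
    have ce: "card e = 2" using sg eE unfolding simple_graph_def by blast
    obtain i j where e0: "e = {i,j}" "i \<noteq> j" using edge2[OF ce] by blast
    have c1: "card (e \<inter> S) = 1" using bp eE by blast
    obtain p q where e: "e = {p,q}" "p \<noteq> q" "p \<in> S" "q \<notin> S"
      using edge_orient[OF e0 c1] by blast
    have pr: "(\<Prod>k\<in>e. flipS S v $ k) = v$q - v$p * v$q" for v
      using e by (simp add: flipS_nth algebra_simps)
    have "(\<Sum>v\<in>V01. u v * (\<Prod>k\<in>e. flipS S v $ k)) = y$q - min (y$p) (y$q)"
      unfolding pr using u(3) u(4) by (simp add: right_diff_distrib sum_subtractf)
    also have "\<dots> = max 0 ((\<Sum>k\<in>e. x$k) - 1)"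
      using e by (simp add: y_def flipS_nth min_def max_def)
    finally show "a e * (\<Sum>v\<in>V01. u v * (\<Prod>k\<in>e. flipS S v $ k)) = a e * max 0 ((\<Sum>k\<in>e. x$k) - 1)"
      by simp
  qed simp
  ultimately show ?thesis using conv_point[OF V01_finite u(1) u(2) vc, of E a] by simp
qed


lemma mem_Q: "((x::real^'n::finite), z) \<in> mccormick_Q E a \<longleftrightarrow> x \<in> cube01 \<and>
     (\<exists>y. (x, y) \<in> mccormick_P E \<and> z = (\<Sum>e\<in>E. a e * y e))"
  unfolding mccormick_Q_def by simp

lemma Q_sub_hull:
  fixes E :: "'n::finite set set"
  assumes sg: "simple_graph E" and apos: "\<forall>e\<in>E. a e > 0" and bp: "\<forall>e\<in>E. card (e \<inter> S) = 1"
  shows "mccormick_Q E a \<subseteq> convex hull graph_B E a"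
proof
  fix p assume pQ: "p \<in> mccormick_Q E a"
  obtain x z where p: "p = (x, z)" by (cases p)
  obtain y where xc: "x \<in> cube01" and xy: "(x, y) \<in> mccormick_P E" and z: "z = (\<Sum>e\<in>E. a e * y e)"
    using pQ unfolding p mem_Q by blast
  have P: "\<forall>e\<in>E. 0 \<le> y e \<and> y e \<le> 1 \<and> (\<forall>i\<in>e. y e \<le> x$i) \<and> y e \<ge> (\<Sum>i\<in>e. x$i) - 1"
    using xy unfolding mem_P by blast
  have lo: "loF E a x \<le> z" unfolding loF_def z
  proof (rule sum_mono)
    fix e assume eE: "e \<in> E"
    have "max 0 ((\<Sum>i\<in>e. x$i) - 1) \<le> y e" using P eE by simp
    then show "a e * max 0 ((\<Sum>i\<in>e. x$i) - 1) \<le> a e * y e"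
      using apos eE by (simp add: mult_left_mono)
  qed
  have hi: "z \<le> hiF E a x" unfolding hiF_def z
  proof (rule sum_mono)
    fix e assume eE: "e \<in> E"
    have ce: "card e = 2" using sg eE unfolding simple_graph_def by blast
    obtain i j where e: "e = {i,j}" "i \<noteq> j" using edge2[OF ce] by blast
    have "y e \<le> x$i" "y e \<le> x$j" using P eE e by auto
    then have "y e \<le> Min ((\<lambda>i. x$i) ` e)" using e by simp
    then show "a e * y e \<le> a e * Min ((\<lambda>i. x$i) ` e)"
      using apos eE by (simp add: mult_left_mono)
  qed
  have Hh: "(x, hiF E a x) \<in> convex hull graph_B E a" by (rule hi_in[OF sg xc])
  have Hl: "(x, loF E a x) \<in> convex hull graph_B E a" by (rule lo_in[OF sg bp xc])
  show "p \<in> convex hull graph_B E a"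
  proof (cases "hiF E a x = loF E a x")
    case True
    then have "z = loF E a x" using lo hi by simp
    then show ?thesis using Hl p by simp
  next
    case False
    then have d: "hiF E a x - loF E a x > 0" using lo hi by simp
    define th where "th = (z - loF E a x) / (hiF E a x - loF E a x)"
    have th: "0 \<le> th" "0 \<le> 1 - th" using lo hi d unfolding th_def by (simp_all add: field_simps)
    have "th * (hiF E a x - loF E a x) = z - loF E a x" using d unfolding th_def by simp
    then have zz: "th * hiF E a x + (1 - th) * loF E a x = z" by (simp add: algebra_simps)
    have "th *\<^sub>R (x, hiF E a x) + (1 - th) *\<^sub>R (x, loF E a x) = (x, z)"
      using zz by (simp add: prod_eq_iff scaleR_collapse algebra_simps)
    moreover have "th *\<^sub>R (x, hiF E a x) + (1 - th) *\<^sub>R (x, loF E a x) \<in> convex hull graph_B E a"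
      by (rule convexD[OF convex_convex_hull Hh Hl th]) simp
    ultimately show ?thesis using p by simp
  qed
qed

lemma bilin_nonneg:
  assumes "x \<in> cube01" "\<forall>e\<in>E. a e > 0"
  shows "0 \<le> bilin E a x"
  unfolding bilin_def using assms unfolding cube01_def
  by (intro sum_nonneg mult_nonneg_nonneg prod_nonneg) (auto simp: less_imp_le)

lemma half_bip:
  fixes E :: "'n::finite set set"
  assumes sg: "simple_graph E" and apos: "\<forall>e\<in>E. a e > 0"
    and h: "((\<chi> i. 1/2) :: real^'n, 0) \<in> convex hull graph_B E a"
  shows "bipartite E"
proof -
  obtain s u where s: "finite s" "s \<subseteq> graph_B E a" "\<forall>p\<in>s. 0 \<le> u p" "sum u s = 1"
    and su: "(\<Sum>p\<in>s. u p *\<^sub>R p) = ((\<chi> i. 1/2) :: real^'n, 0)"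
    using h unfolding convex_hull_explicit by blast
  have pc: "fst p \<in> cube01" "snd p = bilin E a (fst p)" if "p \<in> s" for p
    using s(2) that unfolding graph_B_def by auto
  have fE: "finite E" by (rule finite_subset[OF subset_UNIV]) simp
  have s0: "(\<Sum>p\<in>s. u p * snd p) = 0"
    using arg_cong[OF su, of snd] by (simp add: snd_sum)
  have s1: "(\<Sum>p\<in>s. u p * fst p $ k) = 1/2" for k
    using arg_cong[OF su, of "\<lambda>q. fst q $ k"] by (simp add: fst_sum)
  have "\<forall>p\<in>s. u p * snd p = 0"
    using s0 s(1) s(3) pc bilin_nonneg[OF _ apos]
    by (subst sum_nonneg_eq_0_iff[symmetric]) (auto intro: mult_nonneg_nonneg)
  then have b0: "bilin E a (fst p) = 0" if "p \<in> s" "u p > 0" for p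
    using that pc by auto
  have prod0: "fst p $ i * fst p $ j = 0" if "p \<in> s" "u p > 0" "{i,j} \<in> E" "i \<noteq> j" for p i j
  proof -
    have "\<forall>e\<in>E. a e * (\<Prod>k\<in>e. fst p $ k) = 0"
      using b0[OF that(1,2)] fE pc(1)[OF that(1)] apos unfolding bilin_def cube01_def
      by (subst sum_nonneg_eq_0_iff[symmetric]) (auto intro!: mult_nonneg_nonneg prod_nonneg simp: less_imp_le)
    then have "a {i,j} * (\<Prod>k\<in>{i,j}. fst p $ k) = 0" using that(3) by blast
    moreover have "(\<Prod>k\<in>{i,j}. fst p $ k) = fst p $ i * fst p $ j" using that(4) by simp
    ultimately have m: "a {i,j} * (fst p $ i * fst p $ j) = 0" by (simp only:)
    have "a {i,j} > 0" using apos that(3) by blast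
    then show ?thesis using m by (metis less_irrefl mult_eq_0_iff)
  qed
  obtain p0 where p0: "p0 \<in> s" "u p0 > 0"
  proof -
    have "\<not> (\<forall>p\<in>s. u p = 0)" using s(4) by (metis sum.neutral zero_neq_one)
    then obtain p where "p \<in> s" "u p \<noteq> 0" by blast
    moreover then have "u p > 0" using s(3) by (simp add: less_le)
    ultimately show ?thesis using that by blast
  qed
  have sum1: "fst p0 $ i + fst p0 $ j = 1" if "{i,j} \<in> E" "i \<noteq> j" for i j
  proof -
    have t: "0 \<le> u p * (1 - (fst p $ i + fst p $ j))" if "p \<in> s" for p
    proof (cases "u p > 0")
      case True
      have "fst p $ i * fst p $ j = 0" by (rule prod0[OF \<open>p \<in> s\<close> True \<open>{i,j} \<in> E\<close> \<open>i \<noteq> j\<close>])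
      moreover have "fst p $ i \<le> 1" "fst p $ j \<le> 1" using pc(1)[OF that] unfolding cube01_def by auto
      ultimately have "fst p $ i + fst p $ j \<le> 1" by auto
      then show ?thesis using True by simp
    next
      case False
      have "0 \<le> u p" using s(3) \<open>p \<in> s\<close> by blast
      then have "u p = 0" using False by linarith
      then show ?thesis by simp
    qed
    define f where "f p = u p * (1 - (fst p $ i + fst p $ j))" for p
    have "(\<Sum>p\<in>s. f p) = (\<Sum>p\<in>s. u p - u p * fst p $ i - u p * fst p $ j)"
      unfolding f_def by (rule sum.cong) (simp_all add: algebra_simps)
    also have "\<dots> = sum u s - (\<Sum>p\<in>s. u p * fst p $ i) - (\<Sum>p\<in>s. u p * fst p $ j)"
      by (simp only: sum_subtractf)
    also have "\<dots> = 0" using s(4) s1[of i] s1[of j] by simp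
    finally have z: "(\<Sum>p\<in>s. f p) = 0" .
    have tf: "\<And>p. p \<in> s \<Longrightarrow> 0 \<le> f p" unfolding f_def by (rule t)
    have "\<forall>p\<in>s. f p = 0" using z sum_nonneg_eq_0_iff[OF s(1) tf] by simp
    then have "f p0 = 0" using p0 by blast
    then have "u p0 * (1 - (fst p0 $ i + fst p0 $ j)) = 0" unfolding f_def .
    then show ?thesis using p0 by simp
  qed
  define S where "S = {k. fst p0 $ k = 1}"
  have "\<forall>e\<in>E. card (e \<inter> S) = 1"
  proof
    fix e assume eE: "e \<in> E"
    have ce: "card e = 2" using sg eE unfolding simple_graph_def by blast
    obtain i j where e: "e = {i,j}" "i \<noteq> j" using edge2[OF ce] by blast
    have a1: "fst p0 $ i * fst p0 $ j = 0" using prod0[OF p0] eE e by simp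
    have a2: "fst p0 $ i + fst p0 $ j = 1" using sum1 eE e by simp
    show "card (e \<inter> S) = 1"
    proof (cases "fst p0 $ i = 0")
      case True
      then have "fst p0 $ j = 1" using a2 by simp
      then have "e \<inter> S = {j}" using e True unfolding S_def by auto
      then show ?thesis by simp
    next
      case False
      then have "fst p0 $ j = 0" using a1 by simp
      then have "fst p0 $ i = 1" using a2 by simp
      then have "e \<inter> S = {i}" using e \<open>fst p0 $ j = 0\<close> unfolding S_def by auto
      then show ?thesis by simp
    qed
  qed
  then show ?thesis unfolding bipartite_def by (rule exI)
qed

theorem mainTheorem10:
  fixes E :: "'n::finite set set" and a :: "'n set \<Rightarrow> real"
  assumes "simple_graph E"
    and "\<forall>e\<in>E. a e > 0"
  shows "mccormick_Q E a = convex hull (graph_B E a) \<longleftrightarrow> bipartite E"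
proof
  assume eq: "mccormick_Q E a = convex hull (graph_B E a)"
  define c where "c = ((\<chi> i. 1/2) :: real^'n)"
  have "(c, 0) \<in> mccormick_Q E a"
    unfolding mem_Q
  proof (intro conjI exI)
    show cc: "c \<in> cube01" unfolding c_def cube01_def by simp
    show "(c, \<lambda>_. 0) \<in> mccormick_P E"
      unfolding mem_P
    proof (intro conjI)
      show "c \<in> cube01" by (rule cc)
      show "\<forall>e. e \<notin> E \<longrightarrow> (0::real) = 0" by simp
      show "\<forall>e\<in>E. 0 \<le> (0::real) \<and> (0::real) \<le> 1 \<and> (\<forall>i\<in>e. (0::real) \<le> c$i) \<and> (\<Sum>i\<in>e. c$i) - 1 \<le> 0"
      proof
        fix e assume eE: "e \<in> E"
        have ce: "card e = 2" using assms(1) eE unfolding simple_graph_def by blast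
        show "0 \<le> (0::real) \<and> (0::real) \<le> 1 \<and> (\<forall>i\<in>e. (0::real) \<le> c$i) \<and> (\<Sum>i\<in>e. c$i) - 1 \<le> 0"
          using ce unfolding c_def by simp
      qed
    qed
    show "0 = (\<Sum>e\<in>E. a e * (\<lambda>_. 0) e)" by simp
  qed
  then show "bipartite E" using half_bip[OF assms] eq unfolding c_def by simp
next
  assume "bipartite E"
  then obtain S where bp: "\<forall>e\<in>E. card (e \<inter> S) = 1" unfolding bipartite_def by blast
  show "mccormick_Q E a = convex hull (graph_B E a)"
  proof (rule subset_antisym)
    show "mccormick_Q E a \<subseteq> convex hull graph_B E a" by (rule Q_sub_hull[OF assms bp])
    show "convex hull graph_B E a \<subseteq> mccormick_Q E a"
      by (rule hull_minimal[where S=convex, OF B_sub_Q[OF assms(1), of a] Q_convex])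
  qed
qed


end
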